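(* Let $L$ be a solvable finite-dimensional Lie algebra over a field $F$ of characteristic $p$, such that $L^2$ is nilpotent of class less than $p$, and let $A/B$ be a complemented chief factor of $L$. Then the map which assigns to each conjugacy class $\{\exp(\mathrm{ad}\,a)(M) : a \in L\}$ of complements of $A/B$ in $L$ the common core $M_L$ of its elements induces a bijection between the set of all conjugacy classes of complements of $A/B$ in $L$ and the set of all ideals $N$ of $L$ which complement $A/B$ in $C_L(A/B)$ (i.e. $C_L(A/B) = A + N$ and $A \cap N = B$). Consequently there is a bijection between the set of precrowns of $L$ associated with $A/B$ and the set of conjugacy classes of complements of $A/B$ in $L$.
   Context: A chief factor of $L$ is $A/B$ with $B\subsetneq A$ ideals and no ideal strictly between; $C_L(A/B) = \{x : [x,A]\subseteq B\}$. A subalgebra $M$ supplements $A/B$ if $L = A+M$ and $B \subseteq A\cap M$, and complements it if moreover $A \cap M = B$. The core $M_L$ is the largest ideal of $L$ in $M$; $L$ is primitive if some maximal subalgebra has zero core; $L$ is monolithic if it has a unique minimal ideal. Two complements $M,S$ are conjugate if $S = \exp(\mathrm{ad}\,a)(M)$ for some $a\in L$ (for which $\exp(\mathrm{ad}\,a)$ is a defined automorphism). For a supplemented chief factor $A/B$ and a maximal subalgebra $M$ supplementing $A/B$ with $L/M_L$ monolithic and primitive, the chief factor $\mathrm{Soc}(L/M_L) = (A+M_L)/M_L$ is called the precrown of $L$ associated with $M$ and $A/B$; these are the precrowns associated with $A/B$. *)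

theory Defs
  imports Main HOL.Vector_Spaces "HOL-Computational_Algebra.Primes"
begin

text \<open>A Lie algebra over a field 'k is modelled as the whole type 'v, carrying a
vector space structure given by the scalar multiplication scale and a Lie
bracket br. Subsets of 'v play the role of subspaces / subalgebras / ideals;
the algebra L itself is UNIV.\<close>

definition lie_algebra :: "('k::field \<Rightarrow> 'v::ab_group_add \<Rightarrow> 'v) \<Rightarrow> ('v \<Rightarrow> 'v \<Rightarrow> 'v) \<Rightarrow> bool" where
  "lie_algebra scale br \<longleftrightarrow> Vector_Spaces.vector_space scale
     \<and> (\<forall>x. Vector_Spaces.linear scale scale (br x)) \<and> (\<forall>y. Vector_Spaces.linear scale scale (\<lambda>x. br x y))
     \<and> (\<forall>x. br x x = 0)
     \<and> (\<forall>x y z. br x (br y z) + br y (br z x) + br z (br x y) = 0)"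

definition fin_dim :: "('k::field \<Rightarrow> 'v::ab_group_add \<Rightarrow> 'v) \<Rightarrow> bool" where
  "fin_dim scale \<longleftrightarrow> (\<exists>B. finite B \<and> module.span scale B = UNIV)"

definition ssum :: "'v::ab_group_add set \<Rightarrow> 'v set \<Rightarrow> 'v set" where
  "ssum A M = {a + m | a m. a \<in> A \<and> m \<in> M}"

definition bracket_set :: "('k::field \<Rightarrow> 'v::ab_group_add \<Rightarrow> 'v) \<Rightarrow> ('v \<Rightarrow> 'v \<Rightarrow> 'v) \<Rightarrow> 'v set \<Rightarrow> 'v set \<Rightarrow> 'v set" where
  "bracket_set scale br X Y = module.span scale {br x y | x y. x \<in> X \<and> y \<in> Y}"

definition subalgebra :: "('k::field \<Rightarrow> 'v::ab_group_add \<Rightarrow> 'v) \<Rightarrow> ('v \<Rightarrow> 'v \<Rightarrow> 'v) \<Rightarrow> 'v set \<Rightarrow> bool" where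
  "subalgebra scale br S \<longleftrightarrow> module.subspace scale S \<and> (\<forall>x\<in>S. \<forall>y\<in>S. br x y \<in> S)"

definition lie_ideal :: "('k::field \<Rightarrow> 'v::ab_group_add \<Rightarrow> 'v) \<Rightarrow> ('v \<Rightarrow> 'v \<Rightarrow> 'v) \<Rightarrow> 'v set \<Rightarrow> bool" where
  "lie_ideal scale br I \<longleftrightarrow> module.subspace scale I \<and> (\<forall>x. \<forall>y\<in>I. br x y \<in> I)"

text \<open>Derived series: D 0 = L, D (n+1) = [D n, D n].  L^2 = D 1.\<close>
fun derived :: "('k::field \<Rightarrow> 'v::ab_group_add \<Rightarrow> 'v) \<Rightarrow> ('v \<Rightarrow> 'v \<Rightarrow> 'v) \<Rightarrow> nat \<Rightarrow> 'v set" where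
  "derived scale br 0 = UNIV"
| "derived scale br (Suc n) = bracket_set scale br (derived scale br n) (derived scale br n)"

definition solvable :: "('k::field \<Rightarrow> 'v::ab_group_add \<Rightarrow> 'v) \<Rightarrow> ('v \<Rightarrow> 'v \<Rightarrow> 'v) \<Rightarrow> bool" where
  "solvable scale br \<longleftrightarrow> (\<exists>n. derived scale br n = {0})"

text \<open>Lower central series of the Lie algebra K (a subalgebra of L):
 lcs K 1 = K, lcs K (n+1) = [K, lcs K n]  (lcs K 0 = K as well, by convention).\<close>
fun lcs :: "('k::field \<Rightarrow> 'v::ab_group_add \<Rightarrow> 'v) \<Rightarrow> ('v \<Rightarrow> 'v \<Rightarrow> 'v) \<Rightarrow> 'v set \<Rightarrow> nat \<Rightarrow> 'v set" where
  "lcs scale br K 0 = K"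
| "lcs scale br K (Suc 0) = K"
| "lcs scale br K (Suc (Suc n)) = bracket_set scale br K (lcs scale br K (Suc n))"

definition nilpotent_class_less :: "('k::field \<Rightarrow> 'v::ab_group_add \<Rightarrow> 'v) \<Rightarrow> ('v \<Rightarrow> 'v \<Rightarrow> 'v) \<Rightarrow> 'v set \<Rightarrow> nat \<Rightarrow> bool" where
  "nilpotent_class_less scale br K c \<longleftrightarrow> c \<ge> 1 \<and> lcs scale br K c = {0}"

definition chief_factor :: "('k::field \<Rightarrow> 'v::ab_group_add \<Rightarrow> 'v) \<Rightarrow> ('v \<Rightarrow> 'v \<Rightarrow> 'v) \<Rightarrow> 'v set \<Rightarrow> 'v set \<Rightarrow> bool" where
  "chief_factor scale br A B \<longleftrightarrow> lie_ideal scale br A \<and> lie_ideal scale br B \<and> B \<subset> A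
     \<and> \<not> (\<exists>C. lie_ideal scale br C \<and> B \<subset> C \<and> C \<subset> A)"

definition centraliser :: "('v::ab_group_add \<Rightarrow> 'v \<Rightarrow> 'v) \<Rightarrow> 'v set \<Rightarrow> 'v set \<Rightarrow> 'v set" where
  "centraliser br A B = {x. \<forall>a\<in>A. br x a \<in> B}"

definition supplements :: "('k::field \<Rightarrow> 'v::ab_group_add \<Rightarrow> 'v) \<Rightarrow> ('v \<Rightarrow> 'v \<Rightarrow> 'v) \<Rightarrow> 'v set \<Rightarrow> 'v set \<Rightarrow> 'v set \<Rightarrow> bool" where
  "supplements scale br A B M \<longleftrightarrow> subalgebra scale br M \<and> ssum A M = UNIV \<and> B \<subseteq> A \<inter> M"

definition complements :: "('k::field \<Rightarrow> 'v::ab_group_add \<Rightarrow> 'v) \<Rightarrow> ('v \<Rightarrow> 'v \<Rightarrow> 'v) \<Rightarrow> 'v set \<Rightarrow> 'v set \<Rightarrow> 'v set \<Rightarrow> bool" where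
  "complements scale br A B M \<longleftrightarrow> supplements scale br A B M \<and> A \<inter> M = B"

definition complemented :: "('k::field \<Rightarrow> 'v::ab_group_add \<Rightarrow> 'v) \<Rightarrow> ('v \<Rightarrow> 'v \<Rightarrow> 'v) \<Rightarrow> 'v set \<Rightarrow> 'v set \<Rightarrow> bool" where
  "complemented scale br A B \<longleftrightarrow> (\<exists>M. complements scale br A B M)"

definition core :: "('k::field \<Rightarrow> 'v::ab_group_add \<Rightarrow> 'v) \<Rightarrow> ('v \<Rightarrow> 'v \<Rightarrow> 'v) \<Rightarrow> 'v set \<Rightarrow> 'v set" where
  "core scale br M = module.span scale (\<Union>{I. lie_ideal scale br I \<and> I \<subseteq> M})"

definition maximal_subalgebra :: "('k::field \<Rightarrow> 'v::ab_group_add \<Rightarrow> 'v) \<Rightarrow> ('v \<Rightarrow> 'v \<Rightarrow> 'v) \<Rightarrow> 'v set \<Rightarrow> bool" where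
  "maximal_subalgebra scale br M \<longleftrightarrow> subalgebra scale br M \<and> M \<noteq> UNIV
     \<and> \<not> (\<exists>S. subalgebra scale br S \<and> M \<subset> S \<and> S \<subset> UNIV)"

text \<open>Properties of the quotient L/K (K an ideal), stated through the correspondence
between ideals/subalgebras of L/K and ideals/subalgebras of L containing K.\<close>
definition monolithic_mod :: "('k::field \<Rightarrow> 'v::ab_group_add \<Rightarrow> 'v) \<Rightarrow> ('v \<Rightarrow> 'v \<Rightarrow> 'v) \<Rightarrow> 'v set \<Rightarrow> bool" where
  "monolithic_mod scale br K \<longleftrightarrow> (\<exists>!N. lie_ideal scale br N \<and> K \<subset> N
      \<and> \<not> (\<exists>C. lie_ideal scale br C \<and> K \<subset> C \<and> C \<subset> N))"

definition primitive_mod :: "('k::field \<Rightarrow> 'v::ab_group_add \<Rightarrow> 'v) \<Rightarrow> ('v \<Rightarrow> 'v \<Rightarrow> 'v) \<Rightarrow> 'v set \<Rightarrow> bool" where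
  "primitive_mod scale br K \<longleftrightarrow> (\<exists>U. maximal_subalgebra scale br U \<and> K \<subseteq> U \<and> core scale br U = K)"

text \<open>The precrown (A + M_L)/M_L is represented by the pair of ideals (A + M_L, M_L).\<close>
definition precrowns :: "('k::field \<Rightarrow> 'v::ab_group_add \<Rightarrow> 'v) \<Rightarrow> ('v \<Rightarrow> 'v \<Rightarrow> 'v) \<Rightarrow> 'v set \<Rightarrow> 'v set \<Rightarrow> ('v set \<times> 'v set) set" where
  "precrowns scale br A B = {(ssum A (core scale br M), core scale br M) | M.
      maximal_subalgebra scale br M \<and> supplements scale br A B M
      \<and> monolithic_mod scale br (core scale br M) \<and> primitive_mod scale br (core scale br M)}"

definition ad :: "('v \<Rightarrow> 'v \<Rightarrow> 'v) \<Rightarrow> 'v \<Rightarrow> 'v \<Rightarrow> 'v" where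
  "ad br a = br a"

text \<open>exp(ad a) = sum_{k<p} (ad a)^k / k!, considered only when (ad a)^p = 0.\<close>
definition exp_ad :: "('k::field \<Rightarrow> 'v::ab_group_add \<Rightarrow> 'v) \<Rightarrow> ('v \<Rightarrow> 'v \<Rightarrow> 'v) \<Rightarrow> nat \<Rightarrow> 'v \<Rightarrow> 'v \<Rightarrow> 'v" where
  "exp_ad scale br p a x = (\<Sum>k<p. scale (inverse (of_nat (fact k))) ((ad br a ^^ k) x))"

definition lie_automorphism :: "('k::field \<Rightarrow> 'v::ab_group_add \<Rightarrow> 'v) \<Rightarrow> ('v \<Rightarrow> 'v \<Rightarrow> 'v) \<Rightarrow> ('v \<Rightarrow> 'v) \<Rightarrow> bool" where
  "lie_automorphism scale br f \<longleftrightarrow> bij f \<and> Vector_Spaces.linear scale scale f \<and> (\<forall>x y. f (br x y) = br (f x) (f y))"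

definition exp_ok :: "('k::field \<Rightarrow> 'v::ab_group_add \<Rightarrow> 'v) \<Rightarrow> ('v \<Rightarrow> 'v \<Rightarrow> 'v) \<Rightarrow> nat \<Rightarrow> 'v \<Rightarrow> bool" where
  "exp_ok scale br p a \<longleftrightarrow> (\<forall>x. (ad br a ^^ p) x = 0) \<and> lie_automorphism scale br (exp_ad scale br p a)"

definition conj_class :: "('k::field \<Rightarrow> 'v::ab_group_add \<Rightarrow> 'v) \<Rightarrow> ('v \<Rightarrow> 'v \<Rightarrow> 'v) \<Rightarrow> nat \<Rightarrow> 'v set \<Rightarrow> 'v set set" where
  "conj_class scale br p M = {exp_ad scale br p a ` M | a. exp_ok scale br p a}"

definition complement_classes :: "('k::field \<Rightarrow> 'v::ab_group_add \<Rightarrow> 'v) \<Rightarrow> ('v \<Rightarrow> 'v \<Rightarrow> 'v) \<Rightarrow> nat \<Rightarrow> 'v set \<Rightarrow> 'v set \<Rightarrow> 'v set set set" where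
  "complement_classes scale br p A B = {conj_class scale br p M | M. complements scale br A B M}"

definition centraliser_complements :: "('k::field \<Rightarrow> 'v::ab_group_add \<Rightarrow> 'v) \<Rightarrow> ('v \<Rightarrow> 'v \<Rightarrow> 'v) \<Rightarrow> 'v set \<Rightarrow> 'v set \<Rightarrow> 'v set set" where
  "centraliser_complements scale br A B = {N. lie_ideal scale br N
      \<and> centraliser br A B = ssum A N \<and> A \<inter> N = B}"

end

theory Submission
  imports Defs
begin



locale LA =
  fixes scale :: "'k::field \<Rightarrow> 'v::ab_group_add \<Rightarrow> 'v"
    and br :: "'v \<Rightarrow> 'v \<Rightarrow> 'v"
  assumes la: "lie_algebra scale br"
begin

sublocale vector_space scale
  using la unfolding lie_algebra_def by auto

lemma linR: "Vector_Spaces.linear scale scale (br x)"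
  using la unfolding lie_algebra_def by auto
lemma linL: "Vector_Spaces.linear scale scale (\<lambda>x. br x y)"
  using la unfolding lie_algebra_def by auto

lemma br_addR: "br x (y + z) = br x y + br x z"
  using linR[of x] by (simp add: linear_iff_module_hom module_hom.add)
lemma br_addL: "br (x + y) z = br x z + br y z"
  using linL[of z] module_hom.add[of scale scale "\<lambda>x. br x z"] by (simp add: linear_iff_module_hom)
lemma br_scaleR: "br x (scale c y) = scale c (br x y)"
  using linR[of x] by (simp add: linear_iff_module_hom module_hom.scale)
lemma br_scaleL: "br (scale c x) y = scale c (br x y)"
  using linL[of y] module_hom.scale[of scale scale "\<lambda>x. br x y"] by (simp add: linear_iff_module_hom)
lemma br_0R[simp]: "br x 0 = 0"
  using linR[of x] by (simp add: linear_iff_module_hom module_hom.zero)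
lemma br_0L[simp]: "br 0 x = 0"
  using linL[of x] module_hom.zero[of scale scale "\<lambda>y. br y x"] by (simp add: linear_iff_module_hom)
lemma br_negR: "br x (- y) = - br x y"
  using linR[of x] by (simp add: linear_iff_module_hom module_hom.neg)
lemma br_negL: "br (- x) y = - br x y"
  using linL[of y] module_hom.neg[of scale scale "\<lambda>x. br x y"] by (simp add: linear_iff_module_hom)
lemma br_diffR: "br x (y - z) = br x y - br x z"
  using linR[of x] by (simp add: linear_iff_module_hom module_hom.diff)
lemma br_diffL: "br (x - y) z = br x z - br y z"
  using linL[of z] module_hom.diff[of scale scale "\<lambda>x. br x z"] by (simp add: linear_iff_module_hom)
lemma br_sumR: "br x (sum f S) = (\<Sum>i\<in>S. br x (f i))"
  using linR[of x] by (simp add: linear_iff_module_hom module_hom.sum)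
lemma br_sumL: "br (sum f S) y = (\<Sum>i\<in>S. br (f i) y)"
  using linL[of y] module_hom.sum[of scale scale "\<lambda>x. br x y"] by (simp add: linear_iff_module_hom)
lemma br_self[simp]: "br x x = 0"
  using la unfolding lie_algebra_def by auto
lemma anti: "br y x = - br x y"
proof -
  have "br x (x+y) + br y (x+y) = 0" using br_self[of "x+y"] by (simp only: br_addL)
  then have "br x y + br y x = 0" by (simp add: br_addR add.commute)
  then show ?thesis by (simp add: eq_neg_iff_add_eq_0 add.commute)
qed
lemma jac: "br x (br y z) = br (br x y) z + br y (br x z)"
proof -
  have "br x (br y z) + br y (br z x) + br z (br x y) = 0"
    using la unfolding lie_algebra_def by auto
  moreover have "br y (br z x) = - br y (br x z)" by (metis anti br_negR)
  moreover have "br z (br x y) = - br (br x y) z" by (rule anti)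
  ultimately show ?thesis by (simp add: algebra_simps)
qed

lemma idealD: "lie_ideal scale br I \<Longrightarrow> y \<in> I \<Longrightarrow> br x y \<in> I"
  unfolding lie_ideal_def by auto
lemma idealD': "lie_ideal scale br I \<Longrightarrow> y \<in> I \<Longrightarrow> br y x \<in> I"
  unfolding lie_ideal_def by (metis anti subspace_neg)
lemma ideal_sub: "lie_ideal scale br I \<Longrightarrow> subspace I"
  unfolding lie_ideal_def by auto

lemma span_br_closed:
  assumes "\<And>s. s \<in> S \<Longrightarrow> br z s \<in> T" "subspace T" "w \<in> span S"
  shows "br z w \<in> T"
proof -
  have "subspace {w. br z w \<in> T}"
    using assms(2) by (auto intro!: subspaceI simp: subspace_0 br_addR br_scaleR subspace_add subspace_scale)
  then show ?thesis using span_subspace_induct[OF assms(3)] assms(1) by blast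
qed

end



context LA begin

lemma span_brL_closed:
  assumes "\<And>s. s \<in> S \<Longrightarrow> br s z \<in> T" "subspace T" "w \<in> span S"
  shows "br w z \<in> T"
proof -
  have "subspace {w. br w z \<in> T}"
    using assms(2) by (auto intro!: subspaceI simp: subspace_0 br_addL br_scaleL subspace_add subspace_scale)
  then show ?thesis using span_subspace_induct[OF assms(3)] assms(1) by blast
qed

abbreviation K where "K \<equiv> derived scale br 1"
abbreviation Kp where "Kp j \<equiv> lcs scale br K j"

lemma K_eq: "K = span {br x y |x y. True}"
  by (simp add: bracket_set_def)
lemma br_in_K: "br x y \<in> K"
  unfolding K_eq by (rule span_base) auto
lemma K_sub: "subspace K" unfolding K_eq by simp
lemma Kp1: "Kp (Suc 0) = K" by simp
lemma Kp_sub: "subspace (Kp j)"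
proof (cases j)
  case 0 then show ?thesis using K_sub by simp
next
  case (Suc n) then show ?thesis using K_sub by (cases n) (auto simp: bracket_set_def)
qed
lemma Kp_step: "j \<ge> 1 \<Longrightarrow> k \<in> K \<Longrightarrow> u \<in> Kp j \<Longrightarrow> br k u \<in> Kp (Suc j)"
  by (cases j) (auto simp: bracket_set_def intro!: span_base)

lemma Kp_br: "i \<ge> 1 \<Longrightarrow> j \<ge> 1 \<Longrightarrow> u \<in> Kp i \<Longrightarrow> v \<in> Kp j \<Longrightarrow> br u v \<in> Kp (i+j)"
proof (induction i arbitrary: u j v rule: nat_induct_at_least)
  case base
  then show ?case using Kp_step[of j u v] by simp
next
  case (Suc i)
  have S: "Kp (Suc i) = span {br k w |k w. k \<in> K \<and> w \<in> Kp i}"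
    using Suc.hyps by (cases i) (auto simp: bracket_set_def)
  show ?case
  proof (rule span_brL_closed[of "{br k w |k w. k \<in> K \<and> w \<in> Kp i}"])
    show "subspace (Kp (Suc i + j))" by (rule Kp_sub)
    show "u \<in> span {br k w |k w. k \<in> K \<and> w \<in> Kp i}" using Suc.prems S by simp
    fix s assume "s \<in> {br k w |k w. k \<in> K \<and> w \<in> Kp i}"
    then obtain k w where s: "s = br k w" "k \<in> K" "w \<in> Kp i" by auto
    have e: "br s v = br k (br w v) - br w (br k v)" using jac[of k w v] s by simp
    have 1: "br k (br w v) \<in> Kp (Suc i + j)"
      using Kp_step[of "i+j" k "br w v"] Suc s by simp
    have "br k v \<in> Kp (Suc j)" using Kp_step[of j k v] Suc s by simp
    then have 2: "br w (br k v) \<in> Kp (Suc i + j)"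
      using Suc.IH[of "Suc j" w "br k v"] s Suc by simp
    show "br s v \<in> Kp (Suc i + j)" using e 1 2 Kp_sub subspace_diff by metis
  qed
qed

end

locale CF = LA scale br
  for scale :: "'k::field \<Rightarrow> 'v::ab_group_add \<Rightarrow> 'v" and br +
  fixes p :: nat and A B :: "'v set"
  assumes fin: "fin_dim scale" and pr: "prime p" and ch: "of_nat p = (0::'k)"
    and nil: "nilpotent_class_less scale br (derived scale br 1) p"
    and cf: "chief_factor scale br A B"
begin

lemma p2: "p \<ge> 2" using pr prime_ge_2_nat by blast

lemma Kp_zero: "n \<ge> p \<Longrightarrow> Kp n = {0}"
proof (induction n rule: nat_induct_at_least)
  case base then show ?case using nil unfolding nilpotent_class_less_def by simp
next
  case (Suc n)
  then obtain m where "n = Suc m" using p2 by (cases n) auto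
  then have e: "Kp (Suc n) = span {br k u |k u. k \<in> K \<and> u \<in> Kp n}"
    by (simp add: bracket_set_def)
  have "Kp (Suc n) \<subseteq> {0}" unfolding e
    by (rule span_minimal) (use Suc in auto)
  moreover have "0 \<in> Kp (Suc n)" using Kp_sub subspace_0 by blast
  ultimately show ?case by blast
qed

lemma A_ideal: "lie_ideal scale br A" and B_ideal: "lie_ideal scale br B"
  and BA: "B \<subseteq> A" and BneA: "B \<noteq> A"
  using cf unfolding chief_factor_def by auto
lemma A_sub: "subspace A" and B_sub: "subspace B"
  using A_ideal B_ideal ideal_sub by auto
lemma chief_max: "lie_ideal scale br X \<Longrightarrow> B \<subseteq> X \<Longrightarrow> X \<subseteq> A \<Longrightarrow> X = B \<or> X = A"
  using cf unfolding chief_factor_def by auto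

abbreviation C where "C \<equiv> centraliser br A B"

lemma C_iff: "x \<in> C \<longleftrightarrow> (\<forall>a\<in>A. br x a \<in> B)" by (simp add: centraliser_def)
lemma C_sub: "subspace C"
  unfolding centraliser_def
  by (auto intro!: subspaceI simp: br_addL br_scaleL subspace_0[OF B_sub] subspace_add[OF B_sub] subspace_scale[OF B_sub])
lemma C_ideal: "lie_ideal scale br C"
  unfolding lie_ideal_def
proof (intro conjI allI ballI)
  show "subspace C" by (rule C_sub)
  fix z y assume y: "y \<in> C"
  show "br z y \<in> C" unfolding C_iff
  proof
    fix a assume a: "a \<in> A"
    have j: "br y (br z a) = br (br y z) a + br z (br y a)" by (rule jac)
    have "br (br z y) a = - br (br y z) a" using anti[of z y] br_negL by simp
    then have e: "br (br z y) a = br z (br y a) - br y (br z a)"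
      using j by (simp add: algebra_simps)
    have "br z (br y a) \<in> B" using y a C_iff idealD[OF B_ideal] by blast
    moreover have "br y (br z a) \<in> B" using y a C_iff idealD[OF A_ideal] by blast
    ultimately show "br (br z y) a \<in> B" using e subspace_diff[OF B_sub] by metis
  qed
qed

end



context LA begin
lemma ssum_sub: "subspace I \<Longrightarrow> subspace J \<Longrightarrow> subspace (ssum I J)"
  unfolding ssum_def by (rule subspace_sums)
lemma ssumI: "a \<in> I \<Longrightarrow> m \<in> J \<Longrightarrow> a + m \<in> ssum I J"
  unfolding ssum_def by blast
lemma ssumE: "x \<in> ssum I J \<Longrightarrow> (\<And>a m. a \<in> I \<Longrightarrow> m \<in> J \<Longrightarrow> x = a + m \<Longrightarrow> P) \<Longrightarrow> P"
  unfolding ssum_def by blast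
lemma ideal_ssum: "lie_ideal scale br I \<Longrightarrow> lie_ideal scale br J \<Longrightarrow> lie_ideal scale br (ssum I J)"
proof -
  assume I: "lie_ideal scale br I" and J: "lie_ideal scale br J"
  show ?thesis unfolding lie_ideal_def
  proof (intro conjI allI ballI)
    show "subspace (ssum I J)" using I J ideal_sub ssum_sub by blast
    fix x y assume y: "y \<in> ssum I J"
    obtain a m where "a \<in> I" "m \<in> J" "y = a + m" using y by (rule ssumE)
    then show "br x y \<in> ssum I J" using idealD[OF I] idealD[OF J] by (simp add: br_addR ssumI)
  qed
qed
end

context CF begin

lemma ssum_le: "subspace X \<Longrightarrow> I \<subseteq> X \<Longrightarrow> J \<subseteq> X \<Longrightarrow> ssum I J \<subseteq> X"
proof
  fix x assume X: "subspace X" "I \<subseteq> X" "J \<subseteq> X" and x: "x \<in> ssum I J"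
  obtain a m where "a \<in> I" "m \<in> J" "x = a + m" using x by (rule ssumE)
  then show "x \<in> X" using X subspace_add[OF X(1)] by blast
qed
lemma ssum_0R: "X \<subseteq> ssum X B"
proof
  fix x assume "x \<in> X" then show "x \<in> ssum X B" using ssumI[of x X 0 B] subspace_0[OF B_sub] by simp
qed
lemma ssum_0L: "subspace X \<Longrightarrow> B \<subseteq> ssum X B"
proof
  fix x assume "subspace X" "x \<in> B" then show "x \<in> ssum X B" using ssumI[of 0 X x B] subspace_0 by simp
qed

abbreviation central where "central \<equiv> (\<forall>x. \<forall>a\<in>A. br x a \<in> B)"

lemma nc_AKB:
  assumes nc: "\<not> central"
  shows "a \<in> A \<Longrightarrow> \<exists>k\<in>K. a - k \<in> B"
proof -
  let ?G = "span {br x a |x a. a \<in> A}"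
  have GA: "?G \<subseteq> A" by (rule span_minimal) (use A_ideal idealD A_sub in auto)
  have GK: "?G \<subseteq> K" unfolding K_eq by (rule span_mono) auto
  have Gi: "lie_ideal scale br ?G"
    unfolding lie_ideal_def
  proof (intro conjI allI ballI)
    show "subspace ?G" by simp
    fix z y assume "y \<in> ?G"
    then have "y \<in> A" using GA by auto
    then show "br z y \<in> ?G" by (intro span_base) auto
  qed
  let ?X = "ssum ?G B"
  have Xi: "lie_ideal scale br ?X" by (rule ideal_ssum[OF Gi B_ideal])
  have BX: "B \<subseteq> ?X" by (rule ssum_0L) simp
  have XA: "?X \<subseteq> A" by (rule ssum_le[OF A_sub GA BA])
  obtain x a0 where xa: "a0 \<in> A" "br x a0 \<notin> B" using nc by auto
  have "br x a0 \<in> ?X" using ssumI[of "br x a0" ?G 0 B] xa subspace_0[OF B_sub] by (auto intro: span_base)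
  then have "?X \<noteq> B" using xa by auto
  then have "?X = A" using chief_max[OF Xi BX XA] by auto
  moreover assume "a \<in> A"
  ultimately have "a \<in> ?X" by simp
  then obtain g b where gb: "g \<in> ?G" "b \<in> B" "a = g + b" by (rule ssumE)
  then have "a - g \<in> B" by simp
  moreover have "g \<in> K" using GK gb by auto
  ultimately show ?thesis by blast
qed

lemma nc_KA:
  assumes nc: "\<not> central"
  shows "k \<in> K \<Longrightarrow> a \<in> A \<Longrightarrow> br k a \<in> B"
proof -
  let ?G = "span {br k a |k a. k \<in> K \<and> a \<in> A}"
  have GA: "?G \<subseteq> A" by (rule span_minimal) (use A_ideal idealD A_sub in auto)
  have Gi: "lie_ideal scale br ?G"
    unfolding lie_ideal_def
  proof (intro conjI allI ballI)
    show "subspace ?G" by simp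
    fix z y assume y: "y \<in> ?G"
    show "br z y \<in> ?G"
    proof (rule span_br_closed[OF _ _ y])
      show "subspace ?G" by simp
      fix s assume "s \<in> {br k a |k a. k \<in> K \<and> a \<in> A}"
      then obtain k a where s: "s = br k a" "k \<in> K" "a \<in> A" by auto
      have "br z s = br (br z k) a + br k (br z a)" using s jac[of z k a] by simp
      moreover have "br (br z k) a \<in> ?G" using s br_in_K by (intro span_base) auto
      moreover have "br k (br z a) \<in> ?G" using s idealD[OF A_ideal] by (intro span_base) auto
      ultimately show "br z s \<in> ?G" by (simp add: span_add)
    qed
  qed
  let ?X = "ssum ?G B"
  have Xi: "lie_ideal scale br ?X" by (rule ideal_ssum[OF Gi B_ideal])
  have BX: "B \<subseteq> ?X" by (rule ssum_0L) simp
  have XA: "?X \<subseteq> A" by (rule ssum_le[OF A_sub GA BA])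
  have "?X \<noteq> A"
  proof
    assume XA: "?X = A"
    have "j \<ge> 1 \<Longrightarrow> A \<subseteq> ssum (Kp j) B" for j
    proof (induction j rule: nat_induct_at_least)
      case base
      show ?case
      proof
        fix a assume "a \<in> A"
        then obtain k where "k \<in> K" "a - k \<in> B" using nc_AKB[OF nc] by blast
        then show "a \<in> ssum (Kp 1) B" using ssumI[of k "Kp 1" "a - k" B] by simp
      qed
    next
      case (Suc j)
      have GS: "?G \<subseteq> ssum (Kp (Suc j)) B"
      proof (rule span_minimal)
        show "subspace (ssum (Kp (Suc j)) B)" by (rule ssum_sub[OF Kp_sub B_sub])
        show "{br k a |k a. k \<in> K \<and> a \<in> A} \<subseteq> ssum (Kp (Suc j)) B"
        proof clarify
          fix k a assume ka: "k \<in> K" "a \<in> A"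
          then have "a \<in> ssum (Kp j) B" using Suc by blast
          then obtain u b where ub: "u \<in> Kp j" "b \<in> B" "a = u + b" by (rule ssumE)
          have "br k a = br k u + br k b" using ub br_addR by simp
          moreover have "br k u \<in> Kp (Suc j)" using Kp_step Suc ka ub by blast
          moreover have "br k b \<in> B" using idealD[OF B_ideal] ub by blast
          ultimately show "br k a \<in> ssum (Kp (Suc j)) B" by (simp add: ssumI)
        qed
      qed
      show ?case
      proof
        fix a assume "a \<in> A"
        then have "a \<in> ?X" by (simp only: XA)
        then obtain g b where gb: "g \<in> ?G" "b \<in> B" "a = g + b" by (rule ssumE)
        then have "g \<in> ssum (Kp (Suc j)) B" using GS by blast
        then obtain u b' where "u \<in> Kp (Suc j)" "b' \<in> B" "g = u + b'" by (rule ssumE)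
        then show "a \<in> ssum (Kp (Suc j)) B" using gb ssumI[of u _ "b' + b" B] subspace_add[OF B_sub]
          by (simp add: add.assoc)
      qed
    qed
    from this[of p] p2 have "A \<subseteq> ssum {0} B" using Kp_zero[of p] by simp
    have "A \<subseteq> B"
    proof
      fix x assume "x \<in> A"
      then have "x \<in> ssum {0} B" using \<open>A \<subseteq> ssum {0} B\<close> by blast
      then obtain u b where "u \<in> {0}" "b \<in> B" "x = u + b" by (rule ssumE)
      then show "x \<in> B" by simp
    qed
    then show False using BA BneA by auto
  qed
  then have X: "?X = B" using chief_max[OF Xi BX XA] by auto
  assume "k \<in> K" "a \<in> A"
  then have "br k a \<in> ?X" using ssumI[of "br k a" ?G 0 B] subspace_0[OF B_sub] by (auto intro: span_base)
  then show "br k a \<in> B" using X by simp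
qed

lemma AA: "a \<in> A \<Longrightarrow> a' \<in> A \<Longrightarrow> br a a' \<in> B"
proof (cases central)
  case True then show "a \<in> A \<Longrightarrow> a' \<in> A \<Longrightarrow> br a a' \<in> B" by auto
next
  case False
  assume a: "a \<in> A" "a' \<in> A"
  then obtain k where k: "k \<in> K" "a - k \<in> B" using nc_AKB[OF False] by blast
  have "br a a' = br k a' + br (a - k) a'" by (simp add: br_diffL)
  moreover have "br k a' \<in> B" using nc_KA[OF False k(1) a(2)] .
  moreover have "br (a - k) a' \<in> B" using idealD'[OF B_ideal k(2)] .
  ultimately show ?thesis using subspace_add[OF B_sub] by simp
qed

lemma A_C: "A \<subseteq> C" using AA C_iff by blast
lemma nc_K_C: "\<not> central \<Longrightarrow> K \<subseteq> C" using nc_KA C_iff by blast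

lemma nc_inj:
  assumes nc: "\<not> central" and y: "y \<notin> C" and a: "a \<in> A" "br y a \<in> B"
  shows "a \<in> B"
proof -
  let ?X = "{a \<in> A. br y a \<in> B}"
  have Xi: "lie_ideal scale br ?X"
    unfolding lie_ideal_def
  proof (intro conjI allI ballI)
    show "subspace ?X"
      by (auto intro!: subspaceI simp: subspace_0[OF A_sub] subspace_0[OF B_sub] br_addR br_scaleR
          subspace_add[OF A_sub] subspace_add[OF B_sub] subspace_scale[OF A_sub] subspace_scale[OF B_sub])
    fix z w assume w: "w \<in> ?X"
    have "br y (br z w) = br (br y z) w + br z (br y w)" by (rule jac)
    moreover have "br (br y z) w \<in> B" using nc_K_C[OF nc] br_in_K w C_iff by blast
    moreover have "br z (br y w) \<in> B" using w idealD[OF B_ideal] by blast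
    ultimately show "br z w \<in> ?X" using w idealD[OF A_ideal] subspace_add[OF B_sub] by auto
  qed
  have "B \<subseteq> ?X" using BA idealD[OF B_ideal] by auto
  moreover have "?X \<noteq> A" using y C_iff by auto
  ultimately have "?X = B" using chief_max[OF Xi] by auto
  then show ?thesis using a by auto
qed

lemma nc_surj:
  assumes nc: "\<not> central" and y: "y \<notin> C" and a: "a \<in> A"
  shows "\<exists>a'\<in>A \<inter> K. br y a' - a \<in> B"
proof -
  let ?X = "ssum (br y ` A) B"
  have sub1: "subspace (br y ` A)"
    using linR[of y] A_sub by (simp add: linear_iff_module_hom module_hom.subspace_image)
  have Xi: "lie_ideal scale br ?X"
    unfolding lie_ideal_def
  proof (intro conjI allI ballI)
    show "subspace ?X" by (rule ssum_sub[OF sub1 B_sub])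
    fix z w assume "w \<in> ?X"
    then obtain a1 b where ab: "a1 \<in> A" "b \<in> B" "w = br y a1 + b" by (auto elim: ssumE)
    have j: "br z (br y a1) = br (br z y) a1 + br y (br z a1)" by (rule jac)
    have "br (br z y) a1 \<in> B" using nc_K_C[OF nc] br_in_K ab C_iff by blast
    moreover have "br z b \<in> B" using ab idealD[OF B_ideal] by blast
    ultimately have "br (br z y) a1 + br z b \<in> B" using subspace_add[OF B_sub] by blast
    moreover have "br z w = br y (br z a1) + (br (br z y) a1 + br z b)" using ab j br_addR by (simp add: algebra_simps)
    ultimately show "br z w \<in> ?X" using ab idealD[OF A_ideal] by (auto intro!: ssumI)
  qed
  have BX: "B \<subseteq> ?X" by (rule ssum_0L[OF sub1])
  have XA: "?X \<subseteq> A" by (rule ssum_le[OF A_sub _ BA]) (use A_ideal idealD in auto)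
  obtain a0 where "a0 \<in> A" "br y a0 \<notin> B" using y C_iff by auto
  moreover have "br y a0 \<in> ?X" using ssumI[of "br y a0" "br y ` A" 0 B] subspace_0[OF B_sub] \<open>a0 \<in> A\<close> by auto
  ultimately have "?X = A" using chief_max[OF Xi BX XA] by auto
  then have "a \<in> ?X" using a by simp
  then obtain u b where ub: "u \<in> br y ` A" "b \<in> B" "a = u + b" by (rule ssumE)
  then obtain a1 where "a1 \<in> A" "u = br y a1" by blast
  then have ab: "a1 \<in> A" "b \<in> B" "a = br y a1 + b" using ub by auto
  obtain k where k: "k \<in> K" "a1 - k \<in> B" using nc_AKB[OF nc ab(1)] by blast
  have kA: "k \<in> A" using k ab BA subspace_diff[OF A_sub, of a1 "a1 - k"] by auto
  have e: "br y k - a = - br y (a1 - k) - b" using ab by (simp add: br_diffR algebra_simps)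
  have "br y (a1 - k) \<in> B" using idealD[OF B_ideal k(2)] .
  then have "- br y (a1 - k) - b \<in> B" using ab subspace_neg[OF B_sub] subspace_diff[OF B_sub] by blast
  then have "br y k - a \<in> B" using e by simp
  then show ?thesis using k kA by blast
qed

end



context LA begin
lemma core_sub: "subspace M \<Longrightarrow> core scale br M \<subseteq> M"
  unfolding core_def by (rule span_minimal) auto
lemma ideal_le_core: "lie_ideal scale br I \<Longrightarrow> I \<subseteq> M \<Longrightarrow> I \<subseteq> core scale br M"
proof -
  assume "lie_ideal scale br I" "I \<subseteq> M"
  then have "I \<subseteq> \<Union>{I. lie_ideal scale br I \<and> I \<subseteq> M}" by blast
  then show ?thesis unfolding core_def using span_superset by (rule order_trans)
qed
lemma core_ideal: "lie_ideal scale br (core scale br M)"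
  unfolding lie_ideal_def
proof (intro conjI allI ballI)
  show "subspace (core scale br M)" unfolding core_def by simp
  fix z w assume w: "w \<in> core scale br M"
  show "br z w \<in> core scale br M"
  proof (rule span_br_closed[of "\<Union>{I. lie_ideal scale br I \<and> I \<subseteq> M}"])
    show "subspace (core scale br M)" unfolding core_def by simp
    show "w \<in> span (\<Union>{I. lie_ideal scale br I \<and> I \<subseteq> M})" using w unfolding core_def .
    fix s assume "s \<in> \<Union>{I. lie_ideal scale br I \<and> I \<subseteq> M}"
    then obtain I where "lie_ideal scale br I" "I \<subseteq> M" "s \<in> I" by auto
    then show "br z s \<in> core scale br M" using ideal_le_core idealD by blast
  qed
qed
lemma subalg_sub: "subalgebra scale br M \<Longrightarrow> subspace M" unfolding subalgebra_def by auto
lemma subalg_br: "subalgebra scale br M \<Longrightarrow> x \<in> M \<Longrightarrow> y \<in> M \<Longrightarrow> br x y \<in> M" unfolding subalgebra_def by auto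
end

context CF begin

abbreviation compl where "compl M \<equiv> complements scale br A B M"
abbreviation cc where "cc \<equiv> centraliser_complements scale br A B"

lemma complD: assumes "compl M"
  shows "subalgebra scale br M" "subspace M" "ssum A M = UNIV" "A \<inter> M = B" "B \<subseteq> M"
  using assms unfolding complements_def supplements_def subalgebra_def by auto

lemma complI: "subalgebra scale br M \<Longrightarrow> ssum A M = UNIV \<Longrightarrow> A \<inter> M = B \<Longrightarrow> compl M"
  unfolding complements_def supplements_def by auto

lemma cc_iff: "N \<in> cc \<longleftrightarrow> lie_ideal scale br N \<and> C = ssum A N \<and> A \<inter> N = B"
  unfolding centraliser_complements_def by auto

lemma compl_decomp: "compl M \<Longrightarrow> \<exists>a m. a \<in> A \<and> m \<in> M \<and> x = a + m"
proof -
  assume "compl M"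
  then have "x \<in> ssum A M" using complD(3)[of M] by simp
  then show ?thesis by (rule ssumE) blast
qed

lemma compl_core_eq: assumes M: "compl M" shows "core scale br M = C \<inter> M"
proof
  show "core scale br M \<subseteq> C \<inter> M"
  proof
    fix w assume w: "w \<in> core scale br M"
    have "w \<in> M" using w core_sub complD(2)[OF M] by blast
    moreover have "w \<in> C" unfolding C_iff
    proof
      fix a assume "a \<in> A"
      then have "br w a \<in> A \<inter> core scale br M" using idealD[OF A_ideal] idealD'[OF core_ideal w] by blast
      then show "br w a \<in> B" using core_sub complD(2,4)[OF M] by blast
    qed
    ultimately show "w \<in> C \<inter> M" by blast
  qed
  have "lie_ideal scale br (C \<inter> M)"
    unfolding lie_ideal_def
  proof (intro conjI allI ballI)
    show "subspace (C \<inter> M)" using C_sub complD(2)[OF M] subspace_inter by blast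
    fix z w assume w: "w \<in> C \<inter> M"
    obtain a m where am: "a \<in> A" "m \<in> M" "z = a + m" using compl_decomp[OF M] by blast
    have "br w a \<in> B" using w am C_iff by blast
    then have "- br w a \<in> M" using complD(5)[OF M] subspace_neg[OF complD(2)[OF M]] by blast
    then have "br a w \<in> M" using anti[of a w] by simp
    moreover have "br m w \<in> M" using subalg_br[OF complD(1)[OF M]] w am by blast
    ultimately have "br z w \<in> M" using am br_addL subspace_add[OF complD(2)[OF M]] by simp
    moreover have "br z w \<in> C" using idealD[OF C_ideal] w by blast
    ultimately show "br z w \<in> C \<inter> M" by blast
  qed
  then show "C \<inter> M \<subseteq> core scale br M" by (rule ideal_le_core) blast
qed

lemma compl_core_cc: assumes M: "compl M" shows "core scale br M \<in> cc"
  unfolding cc_iff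
proof (intro conjI)
  let ?N = "core scale br M"
  show "lie_ideal scale br ?N" by (rule core_ideal)
  have NC: "?N \<subseteq> C" using compl_core_eq[OF M] by blast
  show "C = ssum A ?N"
  proof
    show "ssum A ?N \<subseteq> C" using ssum_le[OF C_sub A_C NC] .
    show "C \<subseteq> ssum A ?N"
    proof
      fix x assume x: "x \<in> C"
      obtain a m where am: "a \<in> A" "m \<in> M" "x = a + m" using compl_decomp[OF M] by blast
      have "m = x - a" using am by simp
      then have "m \<in> C" using x am A_C subspace_diff[OF C_sub] by blast
      then have "m \<in> ?N" using compl_core_eq[OF M] am by blast
      then show "x \<in> ssum A ?N" using am ssumI by blast
    qed
  qed
  have "B \<subseteq> ?N" using ideal_le_core[OF B_ideal complD(5)[OF M]] .
  then show "A \<inter> ?N = B" using BA core_sub[OF complD(2)[OF M]] complD(4)[OF M] by blast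
qed

lemma compl_sub_eq: assumes M: "compl M" and M': "compl M'" and le: "M \<subseteq> M'" shows "M = M'"
proof
  show "M' \<subseteq> M"
  proof
    fix x assume x: "x \<in> M'"
    obtain a m where am: "a \<in> A" "m \<in> M" "x = a + m" using compl_decomp[OF M] by blast
    have "a = x - m" using am by simp
    then have "a \<in> M'" using x am le subspace_diff[OF complD(2)[OF M']] by blast
    then have "a \<in> B" using am complD(4)[OF M'] by blast
    then have "a \<in> M" using complD(5)[OF M] by blast
    then show "x \<in> M" using am subspace_add[OF complD(2)[OF M]] by simp
  qed
qed (rule le)

lemma cc_props: assumes "N \<in> cc"
  shows "lie_ideal scale br N" "C = ssum A N" "A \<inter> N = B" "B \<subseteq> N" "N \<subseteq> C"
proof -
  show N: "lie_ideal scale br N" "C = ssum A N" "A \<inter> N = B" using assms cc_iff by auto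
  then show "B \<subseteq> N" by blast
  show "N \<subseteq> C" using N(2) ssumI[of 0 A _ N] subspace_0[OF A_sub] by force
qed

lemma central_compl: assumes ce: central and M: "compl M"
  shows "lie_ideal scale br M" "core scale br M = M"
proof -
  show I: "lie_ideal scale br M"
    unfolding lie_ideal_def
  proof (intro conjI allI ballI)
    show "subspace M" using complD(2)[OF M] .
    fix z w assume w: "w \<in> M"
    obtain a m where am: "a \<in> A" "m \<in> M" "z = a + m" using compl_decomp[OF M] by blast
    have "br w a \<in> B" using ce am by blast
    then have "br a w \<in> M" using anti[of a w] subspace_neg[OF complD(2)[OF M]] complD(5)[OF M] by auto
    moreover have "br m w \<in> M" using subalg_br[OF complD(1)[OF M]] w am by blast
    ultimately show "br z w \<in> M" using am br_addL subspace_add[OF complD(2)[OF M]] by simp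
  qed
  show "core scale br M = M" using ideal_le_core[OF I] core_sub[OF complD(2)[OF M]] by blast
qed

lemma central_cc: assumes ce: central and N: "N \<in> cc" shows "compl N" "core scale br N = N"
proof -
  have C: "C = UNIV" using ce C_iff by blast
  show "compl N"
  proof (rule complI)
    show "subalgebra scale br N" using cc_props(1)[OF N] unfolding subalgebra_def lie_ideal_def by auto
    show "ssum A N = UNIV" using cc_props(2)[OF N] C by simp
    show "A \<inter> N = B" using cc_props(3)[OF N] .
  qed
  then show "core scale br N = N" using central_compl[OF ce] by blast
qed

definition Z where "Z N y = {x. br y x \<in> N}"

lemma nc_Z: assumes nc: "\<not> central" and N: "N \<in> cc" and y: "y \<notin> C"
  shows "compl (Z N y)" "core scale br (Z N y) = N"
proof -
  note NI = cc_props(1)[OF N] and Nsub = ideal_sub[OF cc_props(1)[OF N]]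
  have sub: "subspace (Z N y)" unfolding Z_def
    using Nsub by (auto intro!: subspaceI simp: subspace_0 br_addR br_scaleR subspace_add subspace_scale)
  have sa: "subalgebra scale br (Z N y)"
    unfolding subalgebra_def
  proof (intro conjI ballI)
    show "subspace (Z N y)" by (rule sub)
    fix x x' assume "x \<in> Z N y" "x' \<in> Z N y"
    then have "br (br y x) x' \<in> N" "br x (br y x') \<in> N" using idealD[OF NI] idealD'[OF NI] unfolding Z_def by auto
    then show "br x x' \<in> Z N y" unfolding Z_def using jac[of y x x'] subspace_add[OF Nsub] by simp
  qed
  have BN: "B \<subseteq> N" by (rule cc_props(4)[OF N])
  have sumU: "ssum A (Z N y) = UNIV"
  proof (intro set_eqI iffI)
    fix x
    have "br y x \<in> C" using nc_K_C[OF nc] br_in_K by blast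
    then have "br y x \<in> ssum A N" using cc_props(2)[OF N] by simp
    then obtain a1 n where an: "a1 \<in> A" "n \<in> N" "br y x = a1 + n" by (rule ssumE)
    obtain a' where a': "a' \<in> A" "br y a' - a1 \<in> B" using nc_surj[OF nc y an(1)] by blast
    have "br y (x - a') = n - (br y a' - a1)" using an by (simp add: br_diffR algebra_simps)
    moreover have "n - (br y a' - a1) \<in> N" using an a' BN subspace_diff[OF Nsub] by blast
    ultimately have "x - a' \<in> Z N y" unfolding Z_def by simp
    then show "x \<in> ssum A (Z N y)" using ssumI[OF a'(1)] by fastforce
  qed simp
  have capB: "A \<inter> Z N y = B"
  proof
    show "A \<inter> Z N y \<subseteq> B"
    proof
      fix a assume "a \<in> A \<inter> Z N y"
      then have "a \<in> A" "br y a \<in> A \<inter> N" using idealD[OF A_ideal] unfolding Z_def by auto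
      then show "a \<in> B" using nc_inj[OF nc y] cc_props(3)[OF N] by blast
    qed
    show "B \<subseteq> A \<inter> Z N y" using BA BN idealD[OF B_ideal] unfolding Z_def by blast
  qed
  show M: "compl (Z N y)" by (rule complI[OF sa sumU capB])
  show "core scale br (Z N y) = N"
  proof -
    have NZ: "N \<subseteq> Z N y" unfolding Z_def using idealD[OF NI] by blast
    have "C \<inter> Z N y \<subseteq> N"
    proof
      fix x assume x: "x \<in> C \<inter> Z N y"
      then have "x \<in> ssum A N" using cc_props(2)[OF N] by blast
      then obtain a n where an: "a \<in> A" "n \<in> N" "x = a + n" by (rule ssumE)
      have "a = x - n" using an by simp
      then have "a \<in> Z N y" using x an NZ subspace_diff[OF sub] by blast
      then have "a \<in> B" using capB an by blast
      then show "x \<in> N" using an BN subspace_add[OF Nsub] by blast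
    qed
    moreover have "N \<subseteq> C \<inter> Z N y" using NZ cc_props(5)[OF N] by blast
    ultimately show ?thesis using compl_core_eq[OF M] by blast
  qed
qed

lemma nc_Z_uniq: assumes nc: "\<not> central" and M: "compl M" and y: "y \<in> M" "y \<notin> C"
  shows "M = Z (core scale br M) y"
proof (rule compl_sub_eq[OF M])
  show "compl (Z (core scale br M) y)" using nc_Z(1)[OF nc compl_core_cc[OF M] y(2)] .
  show "M \<subseteq> Z (core scale br M) y"
  proof
    fix x assume "x \<in> M"
    then have "br y x \<in> C \<inter> M" using subalg_br[OF complD(1)[OF M]] y nc_K_C[OF nc] br_in_K by blast
    then show "x \<in> Z (core scale br M) y" unfolding Z_def using compl_core_eq[OF M] by simp
  qed
qed

lemma nc_ex_y: assumes nc: "\<not> central" and M: "compl M" shows "\<exists>y\<in>M. y \<notin> C"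
proof -
  obtain z where "z \<notin> C" using nc C_iff by blast
  obtain a m where am: "a \<in> A" "m \<in> M" "z = a + m" using compl_decomp[OF M] by blast
  have "m \<notin> C"
  proof
    assume "m \<in> C" then have "z \<in> C" using am A_C subspace_add[OF C_sub] by blast
    then show False using \<open>z \<notin> C\<close> by blast
  qed
  then show ?thesis using am by blast
qed

lemma cc_exists: assumes N: "N \<in> cc" shows "\<exists>M. compl M \<and> core scale br M = N"
proof (cases central)
  case True then show ?thesis using central_cc[OF True N] by blast
next
  case False
  then obtain y where "y \<notin> C" using C_iff by blast
  then show ?thesis using nc_Z[OF False N] by blast
qed

end



context LA begin

lemma powD_lin: "Vector_Spaces.linear scale scale (br a ^^ k)"
proof (induction k)
  case 0 then show ?case by (simp add: linear_ident)
next
  case (Suc k)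
  then show ?case using Vector_Spaces.linear_compose[OF Suc linR[of a]] by (simp add: o_def)
qed

lemma powD_add: "(br a ^^ k) (x + y) = (br a ^^ k) x + (br a ^^ k) y"
  using powD_lin[where a=a and k=k] by (simp add: linear_iff_module_hom module_hom.add)
lemma powD_scale: "(br a ^^ k) (scale c x) = scale c ((br a ^^ k) x)"
  using powD_lin[where a=a and k=k] by (simp add: linear_iff_module_hom module_hom.scale)
lemma powD_0[simp]: "(br a ^^ k) 0 = 0"
  using powD_lin[where a=a and k=k] by (simp add: linear_iff_module_hom module_hom.zero)
lemma powD_diff: "(br a ^^ k) (x - y) = (br a ^^ k) x - (br a ^^ k) y"
  using powD_lin[where a=a and k=k] by (simp add: linear_iff_module_hom module_hom.diff)
lemma powD_sum: "(br a ^^ k) (sum f S) = (\<Sum>i\<in>S. (br a ^^ k) (f i))"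
  using powD_lin[where a=a and k=k] by (simp add: linear_iff_module_hom module_hom.sum)

lemma powD_ideal: "lie_ideal scale br I \<Longrightarrow> x \<in> I \<Longrightarrow> (br a ^^ k) x \<in> I"
  by (induction k) (auto intro: idealD)

lemma leibniz:
  "(br a ^^ n) (br x y) = (\<Sum>i\<le>n. scale (of_nat (n choose i)) (br ((br a ^^ i) x) ((br a ^^ (n - i)) y)))"
proof (induction n)
  case 0 then show ?case by simp
next
  case (Suc n)
  let ?f = "\<lambda>i. br ((br a ^^ i) x) ((br a ^^ (Suc n - i)) y)"
  have "(br a ^^ Suc n) (br x y) = br a (\<Sum>i\<le>n. scale (of_nat (n choose i)) (br ((br a ^^ i) x) ((br a ^^ (n - i)) y)))"
    using Suc by simp
  also have "\<dots> = (\<Sum>i\<le>n. scale (of_nat (n choose i)) (br ((br a ^^ Suc i) x) ((br a ^^ (n - i)) y)))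
      + (\<Sum>i\<le>n. scale (of_nat (n choose i)) (br ((br a ^^ i) x) ((br a ^^ Suc (n - i)) y)))"
    by (simp add: br_sumR br_scaleR jac[of a] scale_right_distrib sum.distrib)
  also have "(\<Sum>i\<le>n. scale (of_nat (n choose i)) (br ((br a ^^ i) x) ((br a ^^ Suc (n - i)) y)))
      = (\<Sum>i\<le>Suc n. scale (of_nat (n choose i)) (?f i))"
    by (simp add: Suc_diff_le binomial_eq_0)
  also have "(\<Sum>i\<le>n. scale (of_nat (n choose i)) (br ((br a ^^ Suc i) x) ((br a ^^ (n - i)) y)))
      = (\<Sum>i\<le>Suc n. scale (of_nat (case i of 0 \<Rightarrow> 0 | Suc j \<Rightarrow> n choose j)) (?f i))"
    by (subst sum.atMost_Suc_shift) simp
  also have "(\<Sum>i\<le>Suc n. scale (of_nat (case i of 0 \<Rightarrow> 0 | Suc j \<Rightarrow> n choose j)) (?f i))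
      + (\<Sum>i\<le>Suc n. scale (of_nat (n choose i)) (?f i))
      = (\<Sum>i\<le>Suc n. scale (of_nat (Suc n choose i)) (?f i))"
    by (subst sum.distrib[symmetric], rule sum.cong)
       (auto simp: scale_left_distrib[symmetric] split: nat.split)
  finally show ?case .
qed

end

context CF begin

definition ic :: "nat \<Rightarrow> 'k" where "ic k = inverse (of_nat (fact k))"

lemma CHAR_p: "CHAR('k) = p"
proof -
  have "CHAR('k) dvd p" using ch by (simp add: of_nat_eq_0_iff_char_dvd)
  moreover have "CHAR('k) \<noteq> Suc 0" by simp
  ultimately show ?thesis using pr unfolding prime_nat_iff by auto
qed

lemma fact_nz: "n < p \<Longrightarrow> (of_nat (fact n) :: 'k) \<noteq> 0"
  using CHAR_p prime_dvd_fact_iff[OF pr, of n] by (simp add: of_nat_eq_0_iff_char_dvd)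

lemma ic_mult: assumes "i \<le> n" "n < p"
  shows "ic n * of_nat (n choose i) = ic i * ic (n - i)"
proof -
  have e: "(of_nat (fact i) :: 'k) * of_nat (fact (n - i)) * of_nat (n choose i) = of_nat (fact n)"
    using binomial_fact_lemma[OF assms(1)] by (metis of_nat_mult)
  have n1: "(of_nat (fact i) :: 'k) \<noteq> 0" "(of_nat (fact (n - i)) :: 'k) \<noteq> 0" "(of_nat (fact n) :: 'k) \<noteq> 0"
    using fact_nz assms by auto
  have "(of_nat (n choose i) :: 'k) \<noteq> 0" using e n1 by auto
  then show ?thesis unfolding ic_def e[symmetric] using n1 by (simp add: field_simps)
qed

end



context CF begin

abbreviation E where "E a \<equiv> exp_ad scale br p a"

lemma E_eq: "E a x = (\<Sum>k<p. scale (ic k) ((br a ^^ k) x))"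
  unfolding exp_ad_def ad_def ic_def ..

lemma E_add: "E a (x + y) = E a x + E a y"
  unfolding E_eq by (simp add: powD_add scale_right_distrib sum.distrib)
lemma E_scale: "E a (scale c x) = scale c (E a x)"
  unfolding E_eq by (simp add: powD_scale scale_sum_right mult.commute)
lemma E_lin: "Vector_Spaces.linear scale scale (E a)"
  unfolding linear_iff_module_hom module_hom_iff
  using E_add E_scale module_iff_vector_space vector_space_axioms by blast
lemma E_ideal: "lie_ideal scale br I \<Longrightarrow> x \<in> I \<Longrightarrow> E a x \<in> I"
  unfolding E_eq using ideal_sub
  by (intro subspace_sum) (auto intro!: subspace_scale powD_ideal)

lemma inK_pow: assumes aK: "a \<in> K" shows "k \<ge> 1 \<Longrightarrow> (br a ^^ k) x \<in> Kp k"
proof (induction k rule: nat_induct_at_least)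
  case base then show ?case using br_in_K by simp
next
  case (Suc k) then show ?case using Kp_step aK by simp
qed

lemma inK_nil: "a \<in> K \<Longrightarrow> (br a ^^ p) x = 0"
  using inK_pow[of a p x] Kp_zero[of p] p2 by auto

lemma sum_first: "0 < p \<Longrightarrow> (\<Sum>k<p. f k) = f 0 + (\<Sum>k\<in>{Suc 0..<p}. f k)"
  by (simp add: atLeast0LessThan[symmetric] sum.atLeast_Suc_lessThan)

lemma E_inj: assumes nil: "\<And>x. (br a ^^ p) x = 0" shows "inj (E a)"
proof -
  have z: "E a x = 0 \<Longrightarrow> x = 0" for x
  proof -
    assume Ex: "E a x = 0"
    have "k \<le> p \<Longrightarrow> (br a ^^ (p - k)) x = 0" for k
    proof (induction k)
      case 0 then show ?case using nil by simp
    next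
      case (Suc k)
      define m where "m = p - Suc k"
      have pm: "p - k = Suc m" using Suc.prems unfolding m_def by simp
      have hi: "(br a ^^ Suc m) x = 0" using Suc pm by simp
      have v: "(br a ^^ (m + i)) x = 0" if i1: "i \<ge> 1" for i
      proof -
        obtain j where j: "i = Suc j" using i1 by (cases i) auto
        have "(br a ^^ (m + i)) x = (br a ^^ (j + Suc m)) x" using j by (simp add: add.commute)
        also have "\<dots> = (br a ^^ j) ((br a ^^ Suc m) x)" by (simp only: funpow_add o_def)
        finally show ?thesis using hi by simp
      qed
      have "0 = (br a ^^ m) (E a x)" using Ex by simp
      also have "\<dots> = (\<Sum>k<p. scale (ic k) ((br a ^^ (m + k)) x))"
        unfolding E_eq by (simp add: powD_sum powD_scale funpow_add)
      also have "\<dots> = scale (ic 0) ((br a ^^ m) x)"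
        using p2 by (subst sum_first) (auto simp: v intro!: sum.neutral)
      also have "\<dots> = (br a ^^ m) x" by (simp add: ic_def)
      finally show ?case unfolding m_def by simp
    qed
    from this[of p] show "x = 0" by simp
  qed
  show ?thesis
  proof (rule injI)
    fix x y assume "E a x = E a y"
    then have "E a (x - y) = 0"
      using E_lin[of a] by (simp add: linear_iff_module_hom module_hom.diff)
    then have "x - y = 0" using z by blast
    then show "x = y" by simp
  qed
qed

lemma E_bracket: assumes aK: "a \<in> K" shows "E a (br x y) = br (E a x) (E a y)"
proof -
  define e where "e i z = scale (ic i) ((br a ^^ i) z)" for i z
  let ?g = "\<lambda>i j. br (e i x) (e j y)"
  have "E a (br x y) = (\<Sum>n<p. scale (ic n)
       (\<Sum>i\<le>n. scale (of_nat (n choose i)) (br ((br a ^^ i) x) ((br a ^^ (n - i)) y))))"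
    unfolding E_eq leibniz ..
  also have "\<dots> = (\<Sum>n<p. \<Sum>i\<le>n. ?g i (n - i))"
  proof (rule sum.cong[OF refl])
    fix n assume n: "n \<in> {..<p}"
    show "scale (ic n) (\<Sum>i\<le>n. scale (of_nat (n choose i)) (br ((br a ^^ i) x) ((br a ^^ (n - i)) y)))
        = (\<Sum>i\<le>n. ?g i (n - i))"
      unfolding scale_sum_right
    proof (rule sum.cong[OF refl])
      fix i assume "i \<in> {..n}"
      then have "ic n * of_nat (n choose i) = ic i * ic (n - i)" using ic_mult n by auto
      then show "scale (ic n) (scale (of_nat (n choose i)) (br ((br a ^^ i) x) ((br a ^^ (n - i)) y)))
          = ?g i (n - i)"
        unfolding e_def by (simp add: br_scaleL br_scaleR)
    qed
  qed
  also have "\<dots> = (\<Sum>(i,j)\<in>{(i,j). i+j < p}. ?g i j)"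
    by (rule sum.triangle_reindex[symmetric])
  also have "\<dots> = (\<Sum>(i,j)\<in>{..<p} \<times> {..<p}. ?g i j)"
  proof (rule sum.mono_neutral_left)
    show "finite ({..<p} \<times> {..<p})" by simp
    show "{(i, j). i + j < p} \<subseteq> {..<p} \<times> {..<p}" by auto
    show "\<forall>ij\<in>{..<p} \<times> {..<p} - {(i, j). i + j < p}. (case ij of (i,j) \<Rightarrow> ?g i j) = 0"
    proof
      fix ij assume ijm: "ij \<in> {..<p} \<times> {..<p} - {(i, j). i + j < p}"
      obtain i j where ijd: "ij = (i, j)" by (cases ij)
      have ij: "i < p" "j < p" "\<not> i + j < p" using ijm ijd by auto
      then have "i \<ge> 1" "j \<ge> 1" by auto
      then have "e i x \<in> Kp i" "e j y \<in> Kp j"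
        unfolding e_def using inK_pow[OF aK] Kp_sub subspace_scale by blast+
      then have "?g i j \<in> Kp (i + j)" using Kp_br \<open>i \<ge> 1\<close> \<open>j \<ge> 1\<close> by blast
      then show "(case ij of (i,j) \<Rightarrow> ?g i j) = 0" using Kp_zero[of "i+j"] ij ijd by simp
    qed
  qed
  also have "\<dots> = (\<Sum>i<p. \<Sum>j<p. ?g i j)"
    by (rule sum.cartesian_product[symmetric])
  also have "\<dots> = (\<Sum>j<p. \<Sum>i<p. ?g i j)"
    by (rule sum.swap)
  also have "\<dots> = br (E a x) (E a y)"
    unfolding E_eq e_def by (simp add: br_sumL br_sumR)
  finally show ?thesis .
qed

end



context CF begin

lemma fdvs: obtains Bs where "finite_dimensional_vector_space scale Bs"
proof -
  obtain S where S: "finite S" "span S = UNIV" using fin unfolding fin_dim_def by blast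
  obtain Bs where Bs: "Bs \<subseteq> S" "independent Bs" "S \<subseteq> span Bs" by (rule maximal_independent_subset)
  have "span S \<subseteq> span Bs" using Bs(3) by (simp add: span_minimal)
  then have "span Bs = UNIV" using S by auto
  moreover have "finite Bs" using Bs S finite_subset by blast
  ultimately have "finite_dimensional_vector_space scale Bs"
    using Bs(2) by (intro finite_dimensional_vector_space.intro vector_space_axioms
        finite_dimensional_vector_space_axioms.intro) auto
  then show ?thesis by (rule that)
qed

lemma lin_inj_surj: "Vector_Spaces.linear scale scale f \<Longrightarrow> inj f \<Longrightarrow> surj f"
proof -
  obtain Bs where fd: "finite_dimensional_vector_space scale Bs" by (rule fdvs)
  then show "Vector_Spaces.linear scale scale f \<Longrightarrow> inj f \<Longrightarrow> surj f"
    using finite_dimensional_vector_space.linear_inj_imp_surj by blast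
qed

lemma lin_img_eq:
  assumes lf: "Vector_Spaces.linear scale scale f" and fi: "inj f" and I: "subspace I" and le: "f ` I \<subseteq> I"
  shows "f ` I = I"
proof -
  obtain Bs where fd: "finite_dimensional_vector_space scale Bs" by (rule fdvs)
  interpret fd: finite_dimensional_vector_space scale Bs by (rule fd)
  interpret fp: finite_dimensional_vector_space_pair_1 scale Bs scale
    by (intro finite_dimensional_vector_space_pair_1.intro fd vector_space_axioms)
  have "dim (f ` I) = dim I"
    using fp.dim_image_eq[OF lf] fi by (simp add: inj_on_subset)
  moreover have "subspace (f ` I)"
    using lf I by (simp add: linear_iff_module_hom module_hom.subspace_image)
  ultimately show ?thesis using fd.subspace_dim_equal[of "f ` I" I] I le by simp
qed

lemma exp_ok_K: assumes aK: "a \<in> K" shows "exp_ok scale br p a"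
  unfolding exp_ok_def lie_automorphism_def
proof (intro conjI allI)
  show "(ad br a ^^ p) x = 0" for x using inK_nil[OF aK] by (simp add: ad_def)
  show "Vector_Spaces.linear scale scale (E a)" by (rule E_lin)
  have "inj (E a)" using E_inj inK_nil[OF aK] by blast
  then show "bij (E a)" using lin_inj_surj[OF E_lin] by (simp add: bij_def)
  show "E a (br x y) = br (E a x) (E a y)" for x y by (rule E_bracket[OF aK])
qed

lemma exp_okD: assumes "exp_ok scale br p a"
  shows "bij (E a)" "inj (E a)" "surj (E a)" "Vector_Spaces.linear scale scale (E a)"
    "E a (br x y) = br (E a x) (E a y)"
  using assms unfolding exp_ok_def lie_automorphism_def by (auto simp: bij_def)

lemma E_ideal_eq: assumes "exp_ok scale br p a" "lie_ideal scale br I" shows "E a ` I = I"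
  using lin_img_eq[OF exp_okD(4)[OF assms(1)] exp_okD(2)[OF assms(1)] ideal_sub[OF assms(2)]]
    E_ideal[OF assms(2)] by blast

lemma powA: assumes aA: "a \<in> A" shows "k \<ge> 2 \<Longrightarrow> (br a ^^ k) y \<in> B"
proof (induction k rule: nat_induct_at_least)
  case base
  have "br a y \<in> A" using idealD'[OF A_ideal aA] .
  then show ?case using AA[OF aA] by (simp add: numeral_2_eq_2)
next
  case (Suc k) then show ?case using idealD[OF B_ideal] by simp
qed

lemma E_near: assumes aA: "a \<in> A" shows "E a y - y - br a y \<in> B"
proof -
  have p1: "Suc 0 < p" using p2 by simp
  have "E a y = scale (ic 0) ((br a ^^ 0) y) + (scale (ic 1) ((br a ^^ 1) y)
      + (\<Sum>k\<in>{2..<p}. scale (ic k) ((br a ^^ k) y)))"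
    unfolding E_eq using p2 p1
    by (simp add: sum_first sum.atLeast_Suc_lessThan[OF p1] numeral_2_eq_2)
  then have e: "E a y - y - br a y = (\<Sum>k\<in>{2..<p}. scale (ic k) ((br a ^^ k) y))"
    by (simp add: ic_def)
  have "(\<Sum>k\<in>{2..<p}. scale (ic k) ((br a ^^ k) y)) \<in> B"
    by (rule subspace_sum[OF B_sub]) (auto intro!: subspace_scale[OF B_sub] powA[OF aA])
  then show ?thesis using e by simp
qed

lemma E0: "E 0 x = x"
proof -
  have z: "0 < k \<Longrightarrow> (br 0 ^^ k) x = 0" for k by (cases k) simp_all
  have "E 0 x = scale (ic 0) x" unfolding E_eq using p2
    by (subst sum_first) (auto intro!: sum.neutral simp: z)
  then show ?thesis by (simp add: ic_def)
qed

end



context CF begin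

lemma E_Z: assumes ok: "exp_ok scale br p a" and N: "lie_ideal scale br N"
  shows "E a ` Z N y = Z N (E a y)"
proof
  show "E a ` Z N y \<subseteq> Z N (E a y)"
  proof clarify
    fix x assume "x \<in> Z N y"
    then have "br y x \<in> N" unfolding Z_def by simp
    then have "E a (br y x) \<in> N" using E_ideal[OF N] by blast
    then show "E a x \<in> Z N (E a y)" unfolding Z_def using exp_okD(5)[OF ok] by simp
  qed
  show "Z N (E a y) \<subseteq> E a ` Z N y"
  proof
    fix x' assume x': "x' \<in> Z N (E a y)"
    obtain x where x: "x' = E a x" using exp_okD(3)[OF ok] by (metis surjD)
    have "E a (br y x) \<in> N" using x' x exp_okD(5)[OF ok] unfolding Z_def by simp
    then have "E a (br y x) \<in> E a ` N" using E_ideal_eq[OF ok N] by simp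
    then have "br y x \<in> N" using exp_okD(2)[OF ok] by (auto dest: injD)
    then show "x' \<in> E a ` Z N y" using x unfolding Z_def by blast
  qed
qed

lemma nc_conj: assumes nc: "\<not> central" and M1: "compl M1" and M2: "compl M2"
  and co: "core scale br M1 = core scale br M2"
  shows "\<exists>a. exp_ok scale br p a \<and> M2 = E a ` M1"
proof -
  let ?N = "core scale br M1"
  have NI: "lie_ideal scale br ?N" by (rule core_ideal)
  obtain y where y: "y \<in> M1" "y \<notin> C" using nc_ex_y[OF nc M1] by blast
  have M1Z: "M1 = Z ?N y" using nc_Z_uniq[OF nc M1 y] .
  obtain al m2 where am: "al \<in> A" "m2 \<in> M2" "y = al + m2" using compl_decomp[OF M2] by blast
  obtain a where a: "a \<in> A \<inter> K" "br y a - al \<in> B" using nc_surj[OF nc y(2) am(1)] by blast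
  have ok: "exp_ok scale br p a" using exp_ok_K a by blast
  have near: "E a y - y - br a y \<in> B" using E_near a by blast
  have eq: "E a y - m2 = (E a y - y - br a y) - (br y a - al)"
    using am anti[of a y] by (simp add: algebra_simps)
  have "(E a y - y - br a y) - (br y a - al) \<in> B" using subspace_diff[OF B_sub near a(2)] .
  then have "E a y - m2 \<in> B" unfolding eq .
  then have "E a y - m2 \<in> M2" using complD(5)[OF M2] by blast
  then have EyM2: "E a y \<in> M2" using am subspace_add[OF complD(2)[OF M2], of "E a y - m2" m2] by simp
  have EyC: "E a y \<notin> C"
  proof
    assume EC: "E a y \<in> C"
    have "br a y \<in> A" using idealD'[OF A_ideal] a by blast
    then have "E a y - y - br a y + br a y \<in> A" using near BA subspace_add[OF A_sub] by blast
    then have "E a y - y \<in> C" using A_C by auto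
    then have "E a y - (E a y - y) \<in> C" using EC subspace_diff[OF C_sub] by blast
    then show False using y by simp
  qed
  have "M2 = Z (core scale br M2) (E a y)" using nc_Z_uniq[OF nc M2 EyM2 EyC] .
  also have "\<dots> = E a ` M1" using E_Z[OF ok NI] M1Z co by simp
  finally show ?thesis using ok by blast
qed

abbreviation SN where "SN N \<equiv> {M'. compl M' \<and> core scale br M' = N}"

lemma conj_char: assumes M: "compl M" shows "conj_class scale br p M = SN (core scale br M)"
proof
  show "conj_class scale br p M \<subseteq> SN (core scale br M)"
  proof
    fix M' assume "M' \<in> conj_class scale br p M"
    then obtain a where ok: "exp_ok scale br p a" and M': "M' = E a ` M"
      unfolding conj_class_def exp_ad_def by blast
    note lin = exp_okD(4)[OF ok] and inj = exp_okD(2)[OF ok] and hom = exp_okD(5)[OF ok]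
    have EA: "E a ` A = A" and EB: "E a ` B = B" using E_ideal_eq[OF ok] A_ideal B_ideal by auto
    have sa: "subalgebra scale br M'"
      unfolding subalgebra_def M'
    proof (intro conjI ballI)
      show "subspace (E a ` M)" using lin complD(2)[OF M]
        by (simp add: linear_iff_module_hom module_hom.subspace_image)
      fix u v assume "u \<in> E a ` M" "v \<in> E a ` M"
      then obtain x y where "x \<in> M" "y \<in> M" "u = E a x" "v = E a y" by blast
      then show "br u v \<in> E a ` M" using hom subalg_br[OF complD(1)[OF M]] by (metis image_eqI)
    qed
    have su: "ssum A M' = UNIV"
    proof (intro set_eqI iffI)
      fix z
      obtain w where w: "z = E a w" using exp_okD(3)[OF ok] by (metis surjD)
      obtain a1 m where am: "a1 \<in> A" "m \<in> M" "w = a1 + m" using compl_decomp[OF M] by blast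
      have "z = E a a1 + E a m" using w am E_add by simp
      moreover have "E a a1 \<in> A" using E_ideal[OF A_ideal am(1)] .
      ultimately show "z \<in> ssum A M'" using M' am by (auto intro!: ssumI)
    qed simp
    have ca: "A \<inter> M' = B"
    proof
      show "A \<inter> M' \<subseteq> B"
      proof
        fix x assume x: "x \<in> A \<inter> M'"
        then obtain m where m: "m \<in> M" "x = E a m" using M' by blast
        obtain a2 where a2: "a2 \<in> A" "x = E a a2" using x EA by blast
        have "m = a2" using inj m a2 by (auto dest: injD)
        then have "m \<in> B" using m a2 complD(4)[OF M] by blast
        then show "x \<in> B" using m EB by blast
      qed
      show "B \<subseteq> A \<inter> M'" using EB complD(5)[OF M] BA M' by blast
    qed
    have cM': "compl M'" by (rule complI[OF sa su ca])
    have "core scale br M' = core scale br M"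
    proof
      let ?N = "core scale br M" and ?N' = "core scale br M'"
      have "E a ` ?N = ?N" using E_ideal_eq[OF ok core_ideal] .
      then have "?N \<subseteq> M'" using core_sub[OF complD(2)[OF M]] M' by blast
      then show "?N \<subseteq> ?N'" using ideal_le_core[OF core_ideal] by blast
      have "?N' \<subseteq> M"
      proof
        fix x assume x: "x \<in> ?N'"
        have "E a x \<in> ?N'" using E_ideal[OF core_ideal x] .
        then have "E a x \<in> E a ` M" using core_sub[OF complD(2)[OF cM']] M' by blast
        then show "x \<in> M" using inj by (auto dest: injD)
      qed
      then show "?N' \<subseteq> ?N" using ideal_le_core[OF core_ideal] by blast
    qed
    then show "M' \<in> SN (core scale br M)" using cM' by blast
  qed
  show "SN (core scale br M) \<subseteq> conj_class scale br p M"
  proof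
    fix M' assume M': "M' \<in> SN (core scale br M)"
    have "\<exists>a. exp_ok scale br p a \<and> M' = E a ` M"
    proof (cases central)
      case True
      have "M' = M" using central_compl(2)[OF True M] central_compl(2)[OF True] M' by auto
      moreover have "exp_ok scale br p 0" using exp_ok_K subspace_0[OF K_sub] by blast
      ultimately show ?thesis using E0 by (intro exI[of _ 0]) auto
    next
      case False then show ?thesis using nc_conj[OF False M] M' by auto
    qed
    then show "M' \<in> conj_class scale br p M" unfolding conj_class_def exp_ad_def by blast
  qed
qed

lemma classes_iff: "X \<in> complement_classes scale br p A B \<longleftrightarrow> (\<exists>N\<in>cc. X = SN N)"
proof
  assume "X \<in> complement_classes scale br p A B"
  then obtain M where M: "compl M" "X = conj_class scale br p M" unfolding complement_classes_def by blast
  have "X = SN (core scale br M)" using M conj_char[OF M(1)] by simp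
  then show "\<exists>N\<in>cc. X = SN N" using compl_core_cc[OF M(1)] by (intro bexI)
next
  assume "\<exists>N\<in>cc. X = SN N"
  then obtain N where N: "N \<in> cc" "X = SN N" by blast
  then obtain M where M: "compl M" "core scale br M = N" using cc_exists by blast
  then have "X = conj_class scale br p M" using conj_char[OF M(1)] N(2) by simp
  then show "X \<in> complement_classes scale br p A B"
    using M(1) unfolding complement_classes_def by blast
qed

lemma main1: "\<exists>f. bij_betw f (complement_classes scale br p A B) cc
   \<and> (\<forall>X\<in>complement_classes scale br p A B. \<forall>M\<in>X. f X = core scale br M)"
proof -
  define f where "f X = core scale br (SOME M. M \<in> X)" for X :: "'v set set"
  have fS: "f (SN N) = N" if N: "N \<in> cc" for N
  proof -
    have "\<exists>M. M \<in> SN N" using cc_exists[OF N] by blast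
    then have "(SOME M. M \<in> SN N) \<in> SN N" by (rule someI_ex)
    then have "core scale br (SOME M. M \<in> SN N) = N" by blast
    then show ?thesis unfolding f_def .
  qed
  have "bij_betw f (complement_classes scale br p A B) cc"
    unfolding bij_betw_def
  proof
    show "inj_on f (complement_classes scale br p A B)"
    proof (rule inj_onI)
      fix X1 X2 assume X: "X1 \<in> complement_classes scale br p A B" "X2 \<in> complement_classes scale br p A B"
        "f X1 = f X2"
      obtain N1 where N1: "N1 \<in> cc" "X1 = SN N1" using X(1) classes_iff by blast
      obtain N2 where N2: "N2 \<in> cc" "X2 = SN N2" using X(2) classes_iff by blast
      have "N1 = N2" using X(3) fS[OF N1(1)] fS[OF N2(1)] N1(2) N2(2) by simp
      then show "X1 = X2" using N1 N2 by simp
    qed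
    show "f ` complement_classes scale br p A B = cc"
    proof
      show "f ` complement_classes scale br p A B \<subseteq> cc"
      proof
        fix N assume "N \<in> f ` complement_classes scale br p A B"
        then obtain X where X: "X \<in> complement_classes scale br p A B" "N = f X" by blast
        obtain N1 where N1: "N1 \<in> cc" "X = SN N1" using X(1) classes_iff by blast
        show "N \<in> cc" using X N1 fS[OF N1(1)] by simp
      qed
      show "cc \<subseteq> f ` complement_classes scale br p A B"
      proof
        fix N assume N: "N \<in> cc"
        then have "SN N \<in> complement_classes scale br p A B" using classes_iff by blast
        then show "N \<in> f ` complement_classes scale br p A B" by (rule image_eqI[where f=f and x="SN N", OF fS[OF N, symmetric]])
      qed
    qed
  qed
  moreover have "\<forall>X\<in>complement_classes scale br p A B. \<forall>M\<in>X. f X = core scale br M"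
  proof (intro ballI)
    fix X M assume X: "X \<in> complement_classes scale br p A B" and M: "M \<in> X"
    obtain N1 where N1: "N1 \<in> cc" "X = SN N1" using X classes_iff by blast
    show "f X = core scale br M" using M N1 fS[OF N1(1)] by simp
  qed
  ultimately show ?thesis by (intro exI[of _ f] conjI)
qed

lemma ideal_AM: assumes sa: "subalgebra scale br M" and su: "ssum A M = UNIV" and BM: "B \<subseteq> M"
  shows "lie_ideal scale br (A \<inter> M)"
  unfolding lie_ideal_def
proof (intro conjI allI ballI)
  show "subspace (A \<inter> M)" using A_sub subalg_sub[OF sa] subspace_inter by blast
  fix z w assume w: "w \<in> A \<inter> M"
  have "z \<in> ssum A M" using su by simp
  then obtain a m where am: "a \<in> A" "m \<in> M" "z = a + m" by (rule ssumE)
  have "br a w \<in> M" using AA am w BM by blast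
  moreover have "br m w \<in> M" using subalg_br[OF sa] am w by blast
  ultimately have "br z w \<in> M" using am br_addL subspace_add[OF subalg_sub[OF sa]] by simp
  moreover have "br z w \<in> A" using idealD[OF A_ideal] w by blast
  ultimately show "br z w \<in> A \<inter> M" by blast
qed

lemma max_supp_compl: assumes mx: "maximal_subalgebra scale br M" and sp: "supplements scale br A B M"
  shows "compl M"
proof -
  have sa: "subalgebra scale br M" and su: "ssum A M = UNIV" and BM: "B \<subseteq> A \<inter> M"
    using sp unfolding supplements_def by auto
  have "A \<inter> M = B \<or> A \<inter> M = A" using chief_max[OF ideal_AM[OF sa su] BM] BM by auto
  moreover have "A \<inter> M \<noteq> A"
  proof
    assume "A \<inter> M = A"
    then have "ssum A M \<subseteq> M" using ssum_le[OF subalg_sub[OF sa]] by blast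
    then show False using su mx unfolding maximal_subalgebra_def by auto
  qed
  ultimately show ?thesis using sp unfolding complements_def by auto
qed

lemma compl_maximal: assumes M: "compl M" shows "maximal_subalgebra scale br M"
  unfolding maximal_subalgebra_def
proof (intro conjI notI)
  show "subalgebra scale br M" using complD(1)[OF M] .
  show "M = UNIV \<Longrightarrow> False" using complD(4)[OF M] BneA by auto
  assume "\<exists>S. subalgebra scale br S \<and> M \<subset> S \<and> S \<subset> UNIV"
  then obtain S where S: "subalgebra scale br S" "M \<subset> S" "S \<subset> UNIV" by blast
  have su: "ssum A S = UNIV" using complD(3)[OF M] S(2) unfolding ssum_def by blast
  have BS: "B \<subseteq> S" using complD(5)[OF M] S by blast
  obtain s where s: "s \<in> S" "s \<notin> M" using S by blast
  obtain a m where am: "a \<in> A" "m \<in> M" "s = a + m" using compl_decomp[OF M] by blast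
  have "a = s - m" using am by simp
  then have aS: "a \<in> S" using s am S(2) subspace_diff[OF subalg_sub[OF S(1)]] by blast
  have "a \<notin> B"
  proof
    assume "a \<in> B" then have "a \<in> M" using complD(5)[OF M] by blast
    then have "s \<in> M" using am subspace_add[OF complD(2)[OF M]] by simp
    then show False using s by blast
  qed
  then have "A \<inter> S \<noteq> B" using aS am by blast
  then have "A \<inter> S = A" using chief_max[OF ideal_AM[OF S(1) su BS]] BS BA by blast
  then have "ssum A M \<subseteq> S" using ssum_le[OF subalg_sub[OF S(1)]] S(2) by blast
  then show False using complD(3)[OF M] S(3) by auto
qed

lemma above_core: assumes M: "compl M" and Y: "lie_ideal scale br Y" and NY: "core scale br M \<subset> Y"
  shows "A \<subseteq> Y"
proof -
  let ?N = "core scale br M"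
  have Ncc: "?N \<in> cc" by (rule compl_core_cc[OF M])
  have YA: "lie_ideal scale br (Y \<inter> A)"
    unfolding lie_ideal_def using ideal_sub[OF Y] A_sub subspace_inter idealD[OF Y] idealD[OF A_ideal] by blast
  have BY: "B \<subseteq> Y \<inter> A" using cc_props(4)[OF Ncc] NY BA by blast
  have "Y \<inter> A \<noteq> B"
  proof
    assume YB: "Y \<inter> A = B"
    have "Y \<subseteq> ?N"
    proof
      fix y assume y: "y \<in> Y"
      have "y \<in> C" unfolding C_iff using y YB idealD'[OF Y] idealD[OF A_ideal] by blast
      then have "y \<in> ssum A ?N" using cc_props(2)[OF Ncc] by simp
      then obtain a n where an: "a \<in> A" "n \<in> ?N" "y = a + n" by (rule ssumE)
      have "a = y - n" using an by simp
      then have "a \<in> Y" using y an NY subspace_diff[OF ideal_sub[OF Y]] by blast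
      then have "a \<in> ?N" using an YB cc_props(4)[OF Ncc] by blast
      then show "y \<in> ?N" using an subspace_add[OF ideal_sub[OF core_ideal]] by simp
    qed
    then show False using NY by blast
  qed
  then have "Y \<inter> A = A" using chief_max[OF YA BY] by blast
  then show ?thesis by blast
qed

lemma compl_mono: assumes M: "compl M" shows "monolithic_mod scale br (core scale br M)"
  unfolding monolithic_mod_def
proof
  let ?N = "core scale br M"
  let ?X = "ssum A ?N"
  have Ncc: "?N \<in> cc" by (rule compl_core_cc[OF M])
  have Xi: "lie_ideal scale br ?X" by (rule ideal_ssum[OF A_ideal core_ideal])
  have NX: "?N \<subseteq> ?X" using ssumI[of 0 A _ ?N] subspace_0[OF A_sub] by force
  have AX: "A \<subseteq> ?X" using ssumI[of _ A 0 ?N] subspace_0[OF ideal_sub[OF core_ideal]] by force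
  have "A \<noteq> A \<inter> ?N" using cc_props(3)[OF Ncc] BneA by simp
  then have NX': "?N \<subset> ?X" using NX AX by blast
  have low: "?X \<subseteq> Z" if "lie_ideal scale br Z" "?N \<subset> Z" for Z
    using above_core[OF M that] that ssum_le[OF ideal_sub[OF that(1)]] by blast
  show "lie_ideal scale br ?X \<and> ?N \<subset> ?X \<and> \<not> (\<exists>Z. lie_ideal scale br Z \<and> ?N \<subset> Z \<and> Z \<subset> ?X)"
    using Xi NX' low by blast
  show "\<And>Y. lie_ideal scale br Y \<and> ?N \<subset> Y \<and> \<not> (\<exists>Z. lie_ideal scale br Z \<and> ?N \<subset> Z \<and> Z \<subset> Y) \<Longrightarrow> Y = ?X"
  proof -
    fix Y assume Y: "lie_ideal scale br Y \<and> ?N \<subset> Y \<and> \<not> (\<exists>Z. lie_ideal scale br Z \<and> ?N \<subset> Z \<and> Z \<subset> Y)"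
    then have "?X \<subseteq> Y" using low by blast
    then show "Y = ?X" using Y Xi NX' by blast
  qed
qed

lemma compl_prim: assumes M: "compl M" shows "primitive_mod scale br (core scale br M)"
  unfolding primitive_mod_def using compl_maximal[OF M] core_sub[OF complD(2)[OF M]] by blast

lemma main2: "\<exists>g. bij_betw g (precrowns scale br A B) (complement_classes scale br p A B)"
proof -
  define g where "g = (\<lambda>(X::'v set, N::'v set). SN N)"
  have P: "Q \<in> precrowns scale br A B \<longleftrightarrow> (\<exists>M. compl M \<and> Q = (ssum A (core scale br M), core scale br M))" for Q
  proof
    assume "Q \<in> precrowns scale br A B"
    then obtain M where M: "maximal_subalgebra scale br M" "supplements scale br A B M"
      "Q = (ssum A (core scale br M), core scale br M)" unfolding precrowns_def by blast
    show "\<exists>M. compl M \<and> Q = (ssum A (core scale br M), core scale br M)"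
      using max_supp_compl[OF M(1,2)] M(3) by blast
  next
    assume "\<exists>M. compl M \<and> Q = (ssum A (core scale br M), core scale br M)"
    then obtain M where M: "compl M" "Q = (ssum A (core scale br M), core scale br M)" by blast
    have "supplements scale br A B M" using M(1) unfolding complements_def by blast
    then show "Q \<in> precrowns scale br A B" unfolding precrowns_def
      using compl_maximal[OF M(1)] compl_mono[OF M(1)] compl_prim[OF M(1)] M(2) by blast
  qed
  have "bij_betw g (precrowns scale br A B) (complement_classes scale br p A B)"
    unfolding bij_betw_def
  proof
    show "inj_on g (precrowns scale br A B)"
    proof (rule inj_onI)
      fix Q1 Q2 assume Q: "Q1 \<in> precrowns scale br A B" "Q2 \<in> precrowns scale br A B" "g Q1 = g Q2"
      then obtain M1 M2 where M: "compl M1" "Q1 = (ssum A (core scale br M1), core scale br M1)"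
        "compl M2" "Q2 = (ssum A (core scale br M2), core scale br M2)" using P[of Q1] P[of Q2] by blast
      then have "SN (core scale br M1) = SN (core scale br M2)" using Q(3) unfolding g_def by simp
      then have "M1 \<in> SN (core scale br M2)" using M(1) by blast
      then show "Q1 = Q2" using M by simp
    qed
    show "g ` precrowns scale br A B = complement_classes scale br p A B"
    proof
      show "g ` precrowns scale br A B \<subseteq> complement_classes scale br p A B"
      proof
        fix X assume "X \<in> g ` precrowns scale br A B"
        then obtain Q where Q: "Q \<in> precrowns scale br A B" "X = g Q" by blast
        then obtain M where M: "compl M" "Q = (ssum A (core scale br M), core scale br M)" using P by blast
        then have "X = conj_class scale br p M" using Q(2) conj_char[OF M(1)] unfolding g_def by simp
        then show "X \<in> complement_classes scale br p A B" using M(1) unfolding complement_classes_def by blast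
      qed
      show "complement_classes scale br p A B \<subseteq> g ` precrowns scale br A B"
      proof
        fix X assume "X \<in> complement_classes scale br p A B"
        then obtain M where M: "compl M" "X = conj_class scale br p M" unfolding complement_classes_def by blast
        then have "(ssum A (core scale br M), core scale br M) \<in> precrowns scale br A B" using P by blast
        moreover have "X = g (ssum A (core scale br M), core scale br M)" using M conj_char unfolding g_def by simp
        ultimately show "X \<in> g ` precrowns scale br A B" by blast
      qed
    qed
  qed
  then show ?thesis by blast
qed

end


theorem proposition2p7:
  fixes scale :: "'k::field \<Rightarrow> 'v::ab_group_add \<Rightarrow> 'v"
    and br :: "'v \<Rightarrow> 'v \<Rightarrow> 'v"
    and p :: nat
    and A B :: "'v set"
  assumes "lie_algebra scale br"
    and "fin_dim scale"
    and "prime p" and "of_nat p = (0::'k)"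
    and "solvable scale br"
    and "nilpotent_class_less scale br (derived scale br 1) p"
    and "chief_factor scale br A B"
    and "complemented scale br A B"
  shows "(\<exists>f. bij_betw f (complement_classes scale br p A B) (centraliser_complements scale br A B)
            \<and> (\<forall>C\<in>complement_classes scale br p A B. \<forall>M\<in>C. f C = core scale br M))
       \<and> (\<exists>g. bij_betw g (precrowns scale br A B) (complement_classes scale br p A B))"
proof -
  interpret CF scale br p A B
    by (intro CF.intro LA.intro CF_axioms.intro) (use assms in auto)
  show ?thesis using main1 main2 by blast
qed

end
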